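(* Let $k^{*}\ge2$, let $\boldsymbol\beta^\star_1,\ldots,\boldsymbol\beta^\star_{k^{*}}\in\mathbb{R}^d$ be distinct, $r>0$, $\Delta_{\max}:=\max_{i,j}\|\boldsymbol\beta^\star_i-\boldsymbol\beta^\star_j\|$, $\Delta_{\min}:=\min_{i\ne j}\|\boldsymbol\beta^\star_i-\boldsymbol\beta^\star_j\|$, and assume $\Delta_{\min}/r\ge30$. Let $\mathbf{x}_1,\ldots,\mathbf{x}_n$ be generated independently from the stochastic ball mixture model with these centers and radius $r$. If $\boldsymbol\beta\in(\mathbb{R}^d)^{k^{*}}$ is a non-degenerate local minimum of $G_n$, then $G_n(\boldsymbol\beta)\le 4\Delta_{\max}^2$.
   Context: The stochastic ball mixture model has density $f^*=\frac{1}{k^{*}}\sum_{s=1}^{k^{*}}f^*_s$, with $f^*_s$ the uniform density on the Euclidean ball of radius $r$ centered at $\boldsymbol\beta^\star_s$. The empirical $k$-means objective is $G_n(\boldsymbol\beta)=\frac1n\sum_{t=1}^n\min_{j\in[k^{*}]}\|\mathbf{x}_t-\boldsymbol\beta_j\|^2$ for $\boldsymbol\beta=(\boldsymbol\beta_1,\ldots,\boldsymbol\beta_{k^{*}})$. A solution $\boldsymbol\beta$ is non-degenerate if every fitted cluster (the set of data points closest to $\boldsymbol\beta_i$) is nonempty. *)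

theory Defs
  imports "HOL-Probability.Probability"
begin

text \<open>Centers, candidate solutions and data are indexed by natural numbers:
  centers/solution components by 0..<K (K = k*), data points by 0..<n.\<close>

definition ball_mixture :: "nat \<Rightarrow> (nat \<Rightarrow> 'a::euclidean_space) \<Rightarrow> real \<Rightarrow> 'a measure" where
  "ball_mixture K c r = density lborel
     (\<lambda>x. ennreal ((1 / real K) *
        (\<Sum>s<K. indicator (ball (c s) r) x / measure lborel (ball (c s) r))))"

definition Gn :: "nat \<Rightarrow> nat \<Rightarrow> (nat \<Rightarrow> 'a::euclidean_space) \<Rightarrow> (nat \<Rightarrow> 'a) \<Rightarrow> real" where
  "Gn n K xs \<beta> = (1 / real n) * (\<Sum>t<n. Min ((\<lambda>j. (norm (xs t - \<beta> j))^2) ` {..<K}))"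

definition fitted_cluster :: "nat \<Rightarrow> nat \<Rightarrow> (nat \<Rightarrow> 'a::euclidean_space) \<Rightarrow> (nat \<Rightarrow> 'a) \<Rightarrow> nat \<Rightarrow> nat set" where
  "fitted_cluster n K xs \<beta> i = {t. t < n \<and> (\<forall>j<K. norm (xs t - \<beta> i) \<le> norm (xs t - \<beta> j))}"

definition non_degenerate :: "nat \<Rightarrow> nat \<Rightarrow> (nat \<Rightarrow> 'a::euclidean_space) \<Rightarrow> (nat \<Rightarrow> 'a) \<Rightarrow> bool" where
  "non_degenerate n K xs \<beta> \<longleftrightarrow> (\<forall>i<K. fitted_cluster n K xs \<beta> i \<noteq> {})"

definition local_min_Gn :: "nat \<Rightarrow> nat \<Rightarrow> (nat \<Rightarrow> 'a::euclidean_space) \<Rightarrow> (nat \<Rightarrow> 'a) \<Rightarrow> bool" where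
  "local_min_Gn n K xs \<beta> \<longleftrightarrow>
     (\<exists>\<epsilon>>0. \<forall>\<beta>'. (\<forall>j<K. dist (\<beta>' j) (\<beta> j) < \<epsilon>) \<longrightarrow> Gn n K xs \<beta> \<le> Gn n K xs \<beta>')"

definition Delta_max :: "nat \<Rightarrow> (nat \<Rightarrow> 'a::euclidean_space) \<Rightarrow> real" where
  "Delta_max K c = Max {norm (c i - c j) | i j. i < K \<and> j < K}"

definition Delta_min :: "nat \<Rightarrow> (nat \<Rightarrow> 'a::euclidean_space) \<Rightarrow> real" where
  "Delta_min K c = Min {norm (c i - c j) | i j. i < K \<and> j < K \<and> i \<noteq> j}"

end

theory Submission
  imports Defs
begin


lemma ball_meas_pos:
  fixes c :: "'a::euclidean_space"
  assumes "r > 0" shows "measure lborel (ball c r) > 0"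
proof -
  have "measure lebesgue (ball c r) = measure lborel (ball c r)"
    by (simp add: measure_completion)
  then show ?thesis using content_ball_pos[OF assms, of c] by simp
qed

lemma mix_meas:
  fixes c :: "nat \<Rightarrow> 'a::euclidean_space"
  shows "(\<lambda>x. ennreal ((1 / real K) *
        (\<Sum>s<K. indicator (ball (c s) r) x / measure lborel (ball (c s) r)))) \<in> borel_measurable lborel"
   apply (intro measurable_compose[OF _ measurable_ennreal] borel_measurable_times borel_measurable_sum borel_measurable_divide measurable_const borel_measurable_indicator)
  apply (auto simp: borel_open)
  done

lemma prob_mix:
  fixes c :: "nat \<Rightarrow> 'a::euclidean_space"
  assumes "K > 0" "r > 0"
  shows "prob_space (ball_mixture K c r)"
proof (rule prob_spaceI)
  define g where "g = (\<lambda>x::'a. (1 / real K) *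
        (\<Sum>s<K. indicator (ball (c s) r) x / measure lborel (ball (c s) r)))"
  have int: "integrable lborel g"
    unfolding g_def
    apply (rule integrable_mult_right)
    apply (rule Bochner_Integration.integrable_sum)
    apply (rule integrable_divide_zero)
    apply (rule integrable_real_indicator)
    apply (auto simp: emeasure_lborel_ball_finite[simplified])
    done
  have nn: "\<And>x. 0 \<le> g x" unfolding g_def by (intro mult_nonneg_nonneg sum_nonneg divide_nonneg_nonneg) auto
  have "integral\<^sup>L lborel g = (1 / real K) * (\<Sum>s<K. measure lborel (ball (c s) r) / measure lborel (ball (c s) r))"
    unfolding g_def
    apply (subst integral_mult_right_zero)
    apply (subst Bochner_Integration.integral_sum)
     apply (auto intro!: integrable_divide_zero integrable_real_indicator simp: emeasure_lborel_ball_finite[simplified])[1]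
    apply (rule arg_cong[where f="\<lambda>z. 1 / real K * z"])
    apply (rule sum.cong, rule refl)
    apply (subst integral_divide_zero)
    apply (simp only: Bochner_Integration.integral_indicator)
    apply simp
    done
  also have "\<dots> = 1" using ball_meas_pos[OF assms(2)] assms(1) by simp
  finally have I: "integral\<^sup>L lborel g = 1" .
  have "emeasure (ball_mixture K c r) (space (ball_mixture K c r)) = (\<integral>\<^sup>+ x. ennreal (g x) \<partial>lborel)"
    unfolding ball_mixture_def g_def
    using emeasure_density[OF mix_meas[of K c r], of UNIV] by simp
  also have "\<dots> = ennreal (integral\<^sup>L lborel g)"
    by (rule nn_integral_eq_integral[OF int]) (simp add: nn)
  finally show "emeasure (ball_mixture K c r) (space (ball_mixture K c r)) = 1" using I by simp
qed

lemma AE_mix: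
  fixes c :: "nat \<Rightarrow> 'a::euclidean_space"
  shows "AE x in ball_mixture K c r. \<exists>s<K. x \<in> ball (c s) r"
  unfolding ball_mixture_def
  apply (subst AE_density)
   apply (rule mix_meas)
  apply (rule AE_I2)
  apply (rule impI)
  apply (rule ccontr)
  apply (subgoal_tac "(\<Sum>s<K. indicat_real (ball (c s) r) x / measure lborel (ball (c s) r)) = 0")
   apply simp
  apply (rule sum.neutral)
  apply (auto simp: indicator_def)
  done


lemma closer:
  fixes b p x :: "'a::euclidean_space"
  assumes "inner (b - p) (x - p) \<le> 0" "p \<noteq> b" "0 < \<epsilon>" "\<epsilon> < 2"
  shows "norm (x - (b + \<epsilon> *\<^sub>R (p - b))) < norm (x - b)"
proof -
  define d where "d = p - b"
  define w where "w = x - b"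
  have xp: "x - p = w - d" unfolding d_def w_def by simp
  have bp: "b - p = - d" unfolding d_def by simp
  have "inner (b - p) (x - p) = - inner d (w - d)" unfolding bp xp by simp
  then have h1: "inner d (w - d) \<ge> 0" using assms(1) by linarith
  have dpos: "inner d d > 0" using assms(2) unfolding d_def by simp
  have "(norm (w - \<epsilon> *\<^sub>R d))^2 = (norm w)^2 - 2 * \<epsilon> * inner w d + \<epsilon>^2 * inner d d"
  proof -
    have "(norm (w - \<epsilon> *\<^sub>R d))^2 = inner (w - \<epsilon> *\<^sub>R d) (w - \<epsilon> *\<^sub>R d)" by (simp only: power2_norm_eq_inner)
    also have "\<dots> = inner w w - 2 * \<epsilon> * inner w d + \<epsilon>^2 * inner d d"
      by (simp add: inner_diff_left inner_diff_right inner_commute power2_eq_square algebra_simps)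
    also have "inner w w = (norm w)^2" by (simp only: power2_norm_eq_inner)
    finally show ?thesis .
  qed
  also have "inner w d = inner d (w - d) + inner d d"
    by (simp add: inner_diff_right inner_commute)
  finally have eq: "(norm (w - \<epsilon> *\<^sub>R d))^2 = (norm w)^2 - 2 * \<epsilon> * inner d (w - d) - (2 * \<epsilon> - \<epsilon>^2) * inner d d"
    by (simp add: algebra_simps power2_eq_square)
  have "2 * \<epsilon> * inner d (w - d) \<ge> 0" using h1 assms(3) by simp
  moreover have "(2 * \<epsilon> - \<epsilon>^2) * inner d d > 0"
    using dpos assms(3,4) by (intro mult_pos_pos) (auto simp: power2_eq_square)
  ultimately have "(norm (w - \<epsilon> *\<^sub>R d))^2 < (norm w)^2" using eq by linarith
  then have "norm (w - \<epsilon> *\<^sub>R d) < norm w"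
    by (simp add: power_less_imp_less_base)
  moreover have "x - (b + \<epsilon> *\<^sub>R (p - b)) = w - \<epsilon> *\<^sub>R d" unfolding w_def d_def by simp
  ultimately show ?thesis unfolding w_def by metis
qed

lemma Min_img_mono:
  fixes f g :: "nat \<Rightarrow> real"
  assumes "finite A" "A \<noteq> {}" "\<And>j. j \<in> A \<Longrightarrow> g j \<le> f j"
  shows "Min (g ` A) \<le> Min (f ` A)"
proof -
  obtain j where j: "j \<in> A" "Min (f ` A) = f j"
  proof -
    have "Min (f ` A) \<in> f ` A" using Min_in[of "f ` A"] assms(1,2) by auto
    then show ?thesis using that by blast
  qed
  have "Min (g ` A) \<le> g j" using j(1) assms(1) by (intro Min_le) auto
  then show ?thesis using j assms(3)[of j] by simp
qed

lemma Min_img_eq: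
  fixes f :: "nat \<Rightarrow> real"
  assumes "finite A" "i \<in> A" "\<And>j. j \<in> A \<Longrightarrow> f i \<le> f j"
  shows "Min (f ` A) = f i"
  using assms by (intro Min_eqI) auto

lemma det:
  fixes xs :: "nat \<Rightarrow> 'a::euclidean_space" and \<beta> :: "nat \<Rightarrow> 'a"
  assumes data: "\<And>t t'. t < n \<Longrightarrow> t' < n \<Longrightarrow> dist (xs t) (xs t') \<le> R"
    and lm: "local_min_Gn n K xs \<beta>" and nd: "non_degenerate n K xs \<beta>"
    and i: "i < K"
  shows "\<forall>t<n. dist (xs t) (\<beta> i) \<le> R"
proof (rule ccontr)
  assume nC: "\<not> (\<forall>t<n. dist (xs t) (\<beta> i) \<le> R)"
  define C where "C = (\<Inter>t\<in>{..<n}. cball (xs t) R)"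
  have bC: "\<beta> i \<notin> C" using nC unfolding C_def by auto
  obtain t0 where t0: "t0 \<in> fitted_cluster n K xs \<beta> i" using nd i unfolding non_degenerate_def by blast
  have t0n: "t0 < n" and t0min: "\<And>j. j < K \<Longrightarrow> norm (xs t0 - \<beta> i) \<le> norm (xs t0 - \<beta> j)"
    using t0 unfolding fitted_cluster_def by auto
  have dataC: "xs t \<in> C" if "t < n" for t using data that unfolding C_def by (auto simp: dist_commute)
  have convC: "convex C" unfolding C_def by (intro convex_INT) auto
  have closC: "closed C" unfolding C_def by (intro closed_INT) auto
  have neC: "C \<noteq> {}" using dataC[OF t0n] by auto
  define p where "p = closest_point C (\<beta> i)"
  have pC: "p \<in> C" unfolding p_def using closest_point_exists[OF closC neC] by blast
  have pmin: "\<forall>z\<in>C. dist (\<beta> i) p \<le> dist (\<beta> i) z" unfolding p_def using closest_point_exists[OF closC neC] by blast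
  have pb: "p \<noteq> \<beta> i" using pC bC by auto
  have dot: "inner (\<beta> i - p) (y - p) \<le> 0" if "y \<in> C" for y
    using any_closest_point_dot[OF convC closC pC that pmin] .
  obtain e where e: "e > 0" "\<And>\<beta>'. (\<forall>j<K. dist (\<beta>' j) (\<beta> j) < e) \<Longrightarrow> Gn n K xs \<beta> \<le> Gn n K xs \<beta>'"
    using lm unfolding local_min_Gn_def by blast
  define d where "d = norm (p - \<beta> i)"
  have dpos: "d > 0" using pb unfolding d_def by simp
  define \<epsilon> where "\<epsilon> = min (1/2) (e / (2 * d))"
  have epos: "\<epsilon> > 0" "\<epsilon> < 2" using e(1) dpos unfolding \<epsilon>_def by auto
  define \<beta>' where "\<beta>' = \<beta>(i := \<beta> i + \<epsilon> *\<^sub>R (p - \<beta> i))"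
  have "\<forall>j<K. dist (\<beta>' j) (\<beta> j) < e"
  proof (intro allI impI)
    fix j assume "j < K"
    show "dist (\<beta>' j) (\<beta> j) < e"
    proof (cases "j = i")
      case True
      have "dist (\<beta>' j) (\<beta> j) = \<epsilon> * d" using True epos unfolding \<beta>'_def d_def dist_norm by simp
      also have "\<dots> \<le> (e / (2 * d)) * d" using dpos unfolding \<epsilon>_def by (intro mult_right_mono) auto
      also have "\<dots> = e / 2" using dpos by simp
      finally show ?thesis using e(1) by simp
    next
      case False then show ?thesis using e(1) unfolding \<beta>'_def by simp
    qed
  qed
  then have ge: "Gn n K xs \<beta> \<le> Gn n K xs \<beta>'" using e(2) by blast
  have closer_i: "norm (xs t - \<beta>' i) < norm (xs t - \<beta> i)" if "t < n" for t
    unfolding \<beta>'_def using closer[OF dot[OF dataC[OF that]] pb epos] by simp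
  have le_j: "(norm (xs t - \<beta>' j))^2 \<le> (norm (xs t - \<beta> j))^2" if "t < n" for t j
  proof (cases "j = i")
    case True then show ?thesis using closer_i[OF that] by (simp add: power_mono)
  next
    case False then show ?thesis unfolding \<beta>'_def by simp
  qed
  have K0: "{..<K} \<noteq> {}" using i by auto
  have mono: "Min ((\<lambda>j. (norm (xs t - \<beta>' j))^2) ` {..<K}) \<le> Min ((\<lambda>j. (norm (xs t - \<beta> j))^2) ` {..<K})"
    if "t < n" for t
    using le_j[OF that] K0 by (intro Min_img_mono) auto
  have "Min ((\<lambda>j. (norm (xs t0 - \<beta>' j))^2) ` {..<K}) \<le> (norm (xs t0 - \<beta>' i))^2"
    using i by (intro Min_le) auto
  also have "\<dots> < (norm (xs t0 - \<beta> i))^2"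
    using closer_i[OF t0n] by (simp add: power_strict_mono)
  also have "\<dots> = Min ((\<lambda>j. (norm (xs t0 - \<beta> j))^2) ` {..<K})"
    using i t0min by (intro Min_img_eq[symmetric]) (auto simp: power_mono)
  finally have strict: "Min ((\<lambda>j. (norm (xs t0 - \<beta>' j))^2) ` {..<K}) < Min ((\<lambda>j. (norm (xs t0 - \<beta> j))^2) ` {..<K})" .
  have "(\<Sum>t<n. Min ((\<lambda>j. (norm (xs t - \<beta>' j))^2) ` {..<K})) < (\<Sum>t<n. Min ((\<lambda>j. (norm (xs t - \<beta> j))^2) ` {..<K}))"
    using mono strict t0n by (intro sum_strict_mono_ex1) auto
  moreover have "n > 0" using t0n by simp
  ultimately have "Gn n K xs \<beta>' < Gn n K xs \<beta>" unfolding Gn_def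
    by (intro mult_strict_left_mono) auto
  then show False using ge by simp
qed


lemma Dmax_ge:
  fixes c :: "nat \<Rightarrow> 'a::euclidean_space"
  assumes "i < K" "j < K"
  shows "norm (c i - c j) \<le> Delta_max K c"
proof -
  have fin2: "finite {norm (c i - c j) | i j. i < K \<and> j < K}"
    by (rule finite_subset[of _ "(\<lambda>(i,j). norm (c i - c j)) ` ({..<K} \<times> {..<K})"]) auto
  show ?thesis unfolding Delta_max_def using assms by (intro Max_ge[OF fin2]) auto
qed

lemma Dmin_le_Dmax:
  fixes c :: "nat \<Rightarrow> 'a::euclidean_space"
  assumes "K \<ge> 2"
  shows "Delta_min K c \<le> Delta_max K c"
proof -
  have fin1: "finite {norm (c i - c j) | i j. i < K \<and> j < K \<and> i \<noteq> j}"
    by (rule finite_subset[of _ "(\<lambda>(i,j). norm (c i - c j)) ` ({..<K} \<times> {..<K})"]) auto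
  have fin2: "finite {norm (c i - c j) | i j. i < K \<and> j < K}"
    by (rule finite_subset[of _ "(\<lambda>(i,j). norm (c i - c j)) ` ({..<K} \<times> {..<K})"]) auto
  have "Delta_min K c \<le> norm (c 0 - c 1)"
  proof -
    have "\<exists>i j. norm (c 0 - c 1) = norm (c i - c j) \<and> i < K \<and> j < K \<and> i \<noteq> j"
      using assms by (intro exI[of _ "0::nat"] exI[of _ "1::nat"]) auto
    then have "norm (c 0 - c 1) \<in> {norm (c i - c j) | i j. i < K \<and> j < K \<and> i \<noteq> j}" by blast
    then show ?thesis unfolding Delta_min_def by (rule Min_le[OF fin1])
  qed
  also have "\<dots> \<le> Delta_max K c"
    using Dmax_ge[of 0 K 1 c] assms by simp
  finally show ?thesis .
qed

theorem mainTheorem3: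
  fixes c :: "nat \<Rightarrow> 'a::euclidean_space" and K n :: nat and r :: real
  assumes "K \<ge> 2"
    and "inj_on c {..<K}"
    and "r > 0"
    and "Delta_min K c / r \<ge> 30"
  shows "AE xs in PiM {..<n} (\<lambda>_. ball_mixture K c r).
           \<forall>\<beta>. local_min_Gn n K xs \<beta> \<and> non_degenerate n K xs \<beta>
                \<longrightarrow> Gn n K xs \<beta> \<le> 4 * (Delta_max K c)^2"
proof -
  define R where "R = Delta_max K c + 2 * r"
  have "Delta_min K c \<ge> 30 * r" using assms(3,4) by (simp add: field_simps)
  then have Dm: "Delta_max K c \<ge> 30 * r" using Dmin_le_Dmax[OF assms(1), of c] by simp
  have R0: "0 \<le> R" and R2: "R \<le> 2 * Delta_max K c" using Dm assms(3) unfolding R_def by auto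
  have RR: "R^2 \<le> 4 * (Delta_max K c)^2"
  proof -
    have "R^2 \<le> (2 * Delta_max K c)^2" using R0 R2 by (intro power_mono) auto
    then show ?thesis by (simp add: power_mult_distrib)
  qed
  have ps: "prob_space (ball_mixture K c r)" using assms(1,3) by (intro prob_mix) auto
  have AEd: "AE xs in PiM {..<n} (\<lambda>_. ball_mixture K c r). \<forall>t\<in>{..<n}. \<exists>s<K. xs t \<in> ball (c s) r"
  proof (rule AE_finite_allI[OF finite_lessThan])
    fix t assume t: "t \<in> {..<n}"
    show "AE xs in PiM {..<n} (\<lambda>_. ball_mixture K c r). \<exists>s<K. xs t \<in> ball (c s) r"
      by (rule AE_PiM_component[OF _ t AE_mix]) (rule ps)
  qed
  show ?thesis
  proof (rule AE_mp[OF AEd], rule AE_I2, rule impI, rule allI)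
    fix xs :: "nat \<Rightarrow> 'a" and \<beta> :: "nat \<Rightarrow> 'a"
    assume H: "\<forall>t\<in>{..<n}. \<exists>s<K. xs t \<in> ball (c s) r"
    have data: "dist (xs t) (xs t') \<le> R" if "t < n" "t' < n" for t t'
    proof -
      have "\<exists>s<K. xs t \<in> ball (c s) r" using H that(1) by simp
      then obtain s where s: "s < K" "xs t \<in> ball (c s) r" by blast
      have "\<exists>s<K. xs t' \<in> ball (c s) r" using H that(2) by simp
      then obtain s' where s': "s' < K" "xs t' \<in> ball (c s') r" by blast
      have "dist (xs t) (xs t') \<le> dist (xs t) (c s) + dist (c s) (c s') + dist (c s') (xs t')"
        using dist_triangle[of "xs t" "xs t'" "c s"] dist_triangle[of "c s" "xs t'" "c s'"] by linarith
      also have "\<dots> \<le> r + Delta_max K c + r"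
      proof -
        have a1: "dist (xs t) (c s) \<le> r" using s(2) by (simp add: dist_commute)
        have a2: "dist (xs t') (c s') \<le> r" using s'(2) by (simp add: dist_commute)
        have a3: "dist (c s) (c s') \<le> Delta_max K c" using Dmax_ge[OF s(1) s'(1), of c] by (simp add: dist_norm)
        show ?thesis using a1 a2 a3 by (simp add: dist_commute)
      qed
      finally show ?thesis unfolding R_def by simp
    qed
    show "local_min_Gn n K xs \<beta> \<and> non_degenerate n K xs \<beta> \<longrightarrow> Gn n K xs \<beta> \<le> 4 * (Delta_max K c)^2"
    proof
      assume L: "local_min_Gn n K xs \<beta> \<and> non_degenerate n K xs \<beta>"
      have K0: "0 < K" using assms(1) by simp
      have b0: "\<forall>t<n. dist (xs t) (\<beta> 0) \<le> R"
        by (rule det[OF data conjunct1[OF L] conjunct2[OF L] K0])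
      have "(\<Sum>t<n. Min ((\<lambda>j. (norm (xs t - \<beta> j))^2) ` {..<K})) \<le> (\<Sum>t<n. R^2)"
      proof (rule sum_mono)
        fix t assume "t \<in> {..<n}"
        then have "dist (xs t) (\<beta> 0) \<le> R" using b0 by auto
        then have "(norm (xs t - \<beta> 0))^2 \<le> R^2" unfolding dist_norm by (intro power_mono) auto
        moreover have "Min ((\<lambda>j. (norm (xs t - \<beta> j))^2) ` {..<K}) \<le> (norm (xs t - \<beta> 0))^2"
          using K0 by (intro Min_le) auto
        ultimately show "Min ((\<lambda>j. (norm (xs t - \<beta> j))^2) ` {..<K}) \<le> R^2" by linarith
      qed
      then have "Gn n K xs \<beta> \<le> (1 / real n) * (real n * R^2)"
        unfolding Gn_def by (intro mult_left_mono) auto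
      also have "\<dots> \<le> R^2" by (cases "n = 0") auto
      finally show "Gn n K xs \<beta> \<le> 4 * (Delta_max K c)^2" using RR by linarith
    qed
  qed
qed

end
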